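(* Let $L$ be a finite simplicial complex of dimension $k$ with totally ordered vertices, let $M\in Z_k(L;\mathbb{Z}/2)$ be a $k$-cycle and $\Delta$ a $k$-simplex of $M$. Then the reduction mod 2 of the cochain $\mu$ (defined below) evaluates to $1\in\mathbb{Z}/2$ on the chain $O\Delta\times M\in C_{2k}(OL\times L;\mathbb{Z}/2)$, the sum of all cells $\sigma\times b$ with $\sigma$ a $k$-simplex of $OL$ satisfying $p(\sigma)=\Delta$ and $b$ a $k$-simplex of $M$.
   Context: For $L$ with vertex set $V=\{v_0<\dots<v_n\}$, $OL$ is the simplicial complex with vertex set $V\times\{\pm1\}$ (write $v^\pm=(v,\pm1)$) in which $\{(v_0,\varepsilon_0),\dots,(v_j,\varepsilon_j)\}$ spans a simplex iff the $v_i$ are distinct and $\{v_0,\dots,v_j\}$ is a simplex of $L$; $p:OL\to L$, $v^\pm\mapsto v$. Vertices of $OL$ are ordered $v_0^-<v_0^+<v_1^-<v_1^+<\dots<v_n^-<v_n^+$. The cochain $\mu\in C^{2k}(OL\times L;\mathbb{Z})$: for a $k$-simplex $\sigma=[x_0,\dots,x_k]$ of $OL$ and a $k$-simplex $b=[w_0,\dots,w_k]$ of $L$ (vertices in increasing order), regarding each $w_i$ as $w_i^-$, $\mu(\sigma,b)=1$ if $x_0\le w_0^-<x_1\le w_1^-<\dots<x_k\le w_k^-$ and $0$ otherwise. *)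

theory Defs
  imports Main "HOL-Library.Product_Lexorder"
begin

text \<open>Vertices of OL are pairs (v, s) with s = False meaning v^- and s = True meaning v^+;
the lexicographic order on 'a \<times> bool (False < True) is exactly
v0^- < v0^+ < v1^- < v1^+ < ...\<close>

definition simplicial_complex :: "'a set set \<Rightarrow> bool" where
  "simplicial_complex L \<longleftrightarrow>
     (\<forall>s\<in>L. finite s \<and> s \<noteq> {} \<and> (\<forall>t. t \<subseteq> s \<and> t \<noteq> {} \<longrightarrow> t \<in> L))"

definition complex_dim :: "'a set set \<Rightarrow> nat \<Rightarrow> bool" where
  "complex_dim L k \<longleftrightarrow> (\<forall>s\<in>L. card s \<le> k + 1) \<and> (\<exists>s\<in>L. card s = k + 1)"

definition OL :: "'a set set \<Rightarrow> ('a \<times> bool) set set" where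
  "OL L = {\<sigma>. finite \<sigma> \<and> \<sigma> \<noteq> {} \<and> inj_on fst \<sigma> \<and> fst ` \<sigma> \<in> L}"

text \<open>k-chains with Z/2 coefficients are sets of k-simplices; a k-cycle has zero boundary:
every (k-1)-simplex of L is a face of an even number of simplices of the chain.\<close>
definition cycle2 :: "'a set set \<Rightarrow> nat \<Rightarrow> 'a set set \<Rightarrow> bool" where
  "cycle2 L k M \<longleftrightarrow> M \<subseteq> {s\<in>L. card s = k + 1} \<and>
     (\<forall>\<tau>\<in>L. card \<tau> = k \<longrightarrow> even (card {b\<in>M. \<tau> \<subseteq> b}))"

definition mu :: "nat \<Rightarrow> ('a::linorder \<times> bool) set \<Rightarrow> 'a set \<Rightarrow> int" where
  "mu k \<sigma> b =
    (let xs = sorted_list_of_set \<sigma>; ws = map (\<lambda>w. (w, False)) (sorted_list_of_set b) in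
     if length xs = k + 1 \<and> length ws = k + 1 \<and>
        (\<forall>i\<le>k. xs ! i \<le> ws ! i) \<and> (\<forall>i<k. ws ! i < xs ! (i + 1))
     then 1 else 0)"

end

theory Submission
  imports Defs
begin

lemma sls_image:
  fixes f :: "'a::linorder \<Rightarrow> 'b::linorder"
  assumes "finite A" "\<And>x y. x\<in>A \<Longrightarrow> y\<in>A \<Longrightarrow> x<y \<Longrightarrow> f x < f y"
  shows "sorted_list_of_set (f`A) = map f (sorted_list_of_set A)"
proof (rule strict_sorted_equal)
  show "sorted_wrt (<) (sorted_list_of_set (f ` A))" using assms by simp
  have "sorted_wrt (<) (sorted_list_of_set A)" using assms by simp
  then show "sorted_wrt (<) (map f (sorted_list_of_set A))"
    unfolding sorted_wrt_map
    by (rule sorted_wrt_mono_rel[rotated]) (use assms in auto)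
  show "set (sorted_list_of_set (f ` A)) = set (map f (sorted_list_of_set A))" using assms by simp
qed

lemma fst_sls:
  fixes \<sigma> :: "('a::linorder \<times> bool) set"
  assumes "finite \<sigma>" "inj_on fst \<sigma>"
  shows "map fst (sorted_list_of_set \<sigma>) = sorted_list_of_set (fst ` \<sigma>)"
proof -
  have "sorted_list_of_set (fst ` \<sigma>) = map fst (sorted_list_of_set \<sigma>)"
  proof (rule sls_image[OF assms(1)])
    fix x y assume "x \<in> \<sigma>" "y \<in> \<sigma>" "x < y"
    then have "fst x \<le> fst y" "fst x \<noteq> fst y" using assms(2)
      by (auto simp: less_prod_def' inj_on_def)
    then show "fst x < fst y" by simp
  qed
  then show ?thesis by simp
qed


definition SS :: "'a set \<Rightarrow> ('a \<times> bool) set set" where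
  "SS \<Delta> = {\<sigma>. finite \<sigma> \<and> inj_on fst \<sigma> \<and> fst ` \<sigma> = \<Delta>}"

lemma SS_card: "\<sigma> \<in> SS \<Delta> \<Longrightarrow> card \<sigma> = card \<Delta>"
  unfolding SS_def by (auto simp: card_image)

lemma SS_len: "\<sigma> \<in> SS \<Delta> \<Longrightarrow> length (sorted_list_of_set \<sigma>) = card \<Delta>"
  using SS_card by (simp add: SS_def)

lemma SS_nth:
  fixes \<sigma> :: "('a::linorder \<times> bool) set"
  assumes "\<sigma> \<in> SS \<Delta>" "j < card \<Delta>"
  shows "fst (sorted_list_of_set \<sigma> ! j) = sorted_list_of_set \<Delta> ! j"
proof -
  have "map fst (sorted_list_of_set \<sigma>) = sorted_list_of_set \<Delta>"
    using assms fst_sls[of \<sigma>] by (auto simp: SS_def)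
  then show ?thesis using assms SS_len
    by (metis nth_map)
qed

lemma SS_finite: "finite \<Delta> \<Longrightarrow> finite (SS \<Delta>)"
proof -
  assume "finite \<Delta>"
  have "SS \<Delta> \<subseteq> Pow (\<Delta> \<times> UNIV)" by (force simp: SS_def)
  then show ?thesis using \<open>finite \<Delta>\<close> by (meson finite_Pow_iff finite_SigmaI finite_UNIV finite_subset)
qed

lemma mu_char:
  fixes \<sigma> :: "('a::linorder \<times> bool) set"
  assumes "\<sigma> \<in> SS \<Delta>" "card \<Delta> = k+1" "card b = k+1"
  shows "mu k \<sigma> b = (if (\<forall>i\<le>k. sorted_list_of_set \<sigma> ! i \<le> (sorted_list_of_set b ! i, False)) \<and>
     (\<forall>i<k. (sorted_list_of_set b ! i, False) < sorted_list_of_set \<sigma> ! (i+1)) then 1 else 0)"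
proof -
  have l1: "length (sorted_list_of_set \<sigma>) = k+1" using SS_len[OF assms(1)] assms by simp
  have l2: "length (sorted_list_of_set b) = k+1" using assms by simp
  show ?thesis unfolding mu_def Let_def using l1 l2
    by (auto simp: nth_map)
qed


lemma A_Delta:
  fixes \<Delta> :: "'a::linorder set"
  assumes cD: "card \<Delta> = k+1"
  shows "{\<sigma>\<in>SS \<Delta>. mu k \<sigma> \<Delta> = 1} = {\<Delta> \<times> {False}}"
proof -
  have fin: "finite \<Delta>" using cD card.infinite by fastforce
  let ?D = "sorted_list_of_set \<Delta>"
  have sD: "sorted_wrt (<) ?D" by simp
  have lD: "length ?D = k+1" using cD by simp
  have inS: "\<Delta> \<times> {False} \<in> SS \<Delta>" using fin by (auto simp: SS_def inj_on_def image_iff)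
  have eqimg: "\<Delta> \<times> {False} = (\<lambda>w. (w, False)) ` \<Delta>" by auto
  have sl: "sorted_list_of_set (\<Delta> \<times> {False}) = map (\<lambda>w. (w, False)) ?D"
    unfolding eqimg by (rule sls_image[OF fin]) simp
  have mu1: "mu k (\<Delta> \<times> {False}) \<Delta> = 1"
  proof -
    have "\<forall>i<k. (?D ! i, False) < map (\<lambda>w. (w, False)) ?D ! (i+1)"
    proof (intro allI impI)
      fix i assume "i < k"
      then have "?D ! i < ?D ! (i+1)" using sorted_wrt_nth_less[OF sD, of i "i+1"] lD by simp
      then show "(?D ! i, False) < map (\<lambda>w. (w, False)) ?D ! (i+1)" using \<open>i<k\<close> lD by simp
    qed
    then show ?thesis using mu_char[OF inS cD cD] unfolding sl using lD by auto
  qed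
  have uniq: "\<sigma> = \<Delta> \<times> {False}" if "\<sigma> \<in> SS \<Delta>" "mu k \<sigma> \<Delta> = 1" for \<sigma>
  proof -
    let ?xs = "sorted_list_of_set \<sigma>"
    have le: "\<forall>i\<le>k. ?xs ! i \<le> (?D ! i, False)"
      using that mu_char[OF that(1) cD cD] by (auto split: if_splits)
    have fs: "finite \<sigma>" using that by (simp add: SS_def)
    have snd: "snd x = False" if "x \<in> \<sigma>" for x
    proof -
      from \<open>x \<in> \<sigma>\<close> have "x \<in> set ?xs" using fs by simp
      then obtain j where j: "j < length ?xs" "x = ?xs ! j" by (auto simp: in_set_conv_nth)
      have jk: "j < k+1" using j SS_len[OF \<open>\<sigma> \<in> SS \<Delta>\<close>] cD by simp
      have "fst x = ?D ! j" using SS_nth[OF \<open>\<sigma> \<in> SS \<Delta>\<close>, of j] jk cD j by simp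
      moreover have "x \<le> (?D ! j, False)" using le jk j by simp
      ultimately show ?thesis by (cases x) auto
    qed
    have f: "fst ` \<sigma> = \<Delta>" using that by (simp add: SS_def)
    show ?thesis
    proof
      show "\<sigma> \<subseteq> \<Delta> \<times> {False}" using f snd by force
      show "\<Delta> \<times> {False} \<subseteq> \<sigma>"
      proof
        fix y assume "y \<in> \<Delta> \<times> {False}"
        then obtain x where "x \<in> \<sigma>" "fst x = fst y" "snd y = False" using f by force
        then have "snd x = snd y" using snd by simp
        with \<open>x \<in> \<sigma>\<close> \<open>fst x = fst y\<close> show "y \<in> \<sigma>" using prod_eqI[of x y] by simp
      qed
    qed
  qed
  show ?thesis using inS mu1 uniq by blast
qed


definition tg :: "'a \<Rightarrow> 'a \<times> bool \<Rightarrow> 'a \<times> bool" where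
  "tg c x = (if fst x = c then (c, \<not> snd x) else x)"

lemma tg_tg[simp]: "tg c (tg c x) = x"
  by (auto simp: tg_def)

lemma tg_fst[simp]: "fst (tg c x) = fst x"
  by (auto simp: tg_def)

lemma tg_img_img[simp]: "tg c ` (tg c ` \<sigma>) = \<sigma>"
  by (simp add: image_image)

lemma tg_SS: "\<sigma> \<in> SS \<Delta> \<Longrightarrow> tg c ` \<sigma> \<in> SS \<Delta>"
  unfolding SS_def
  by (auto simp: inj_on_def image_image)

lemma tg_sls:
  fixes \<sigma> :: "('a::linorder \<times> bool) set"
  assumes "\<sigma> \<in> SS \<Delta>"
  shows "sorted_list_of_set (tg c ` \<sigma>) = map (tg c) (sorted_list_of_set \<sigma>)"
proof (rule sls_image)
  show "finite \<sigma>" using assms by (simp add: SS_def)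
  fix x y assume "x \<in> \<sigma>" "y \<in> \<sigma>" "x < y"
  then have "fst x \<le> fst y" "fst x \<noteq> fst y" using assms
    by (auto simp: less_prod_def' inj_on_def SS_def)
  then have "fst (tg c x) < fst (tg c y)" by simp
  then show "tg c x < tg c y" by (simp add: less_prod_def')
qed

lemma A_even:
  fixes \<Delta> b :: "'a::linorder set"
  assumes cD: "card \<Delta> = k+1" and cb: "card b = k+1" and ne: "b \<noteq> \<Delta>"
  shows "even (card {\<sigma>\<in>SS \<Delta>. mu k \<sigma> b = 1})"
proof -
  have finD: "finite \<Delta>" using cD card.infinite by fastforce
  have finb: "finite b" using cb card.infinite by fastforce
  let ?D = "sorted_list_of_set \<Delta>"
  let ?W = "sorted_list_of_set b"
  let ?A = "{\<sigma>\<in>SS \<Delta>. mu k \<sigma> b = 1}"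
  have sD: "sorted_wrt (<) ?D" by simp
  have lD: "length ?D = k+1" using cD by simp
  have lW: "length ?W = k+1" using cb by simp
  have "?D \<noteq> ?W" using ne finD finb by (metis set_sorted_list_of_set)
  then have ex: "\<exists>i. i < k+1 \<and> ?D ! i \<noteq> ?W ! i" using lD lW nth_equalityI by metis
  define i where "i = (LEAST i. i < k+1 \<and> ?D ! i \<noteq> ?W ! i)"
  have i: "i < k+1" "?D ! i \<noteq> ?W ! i" using LeastI_ex[OF ex] unfolding i_def by auto
  have before: "?D ! j = ?W ! j" if "j < i" for j
    using not_less_Least[of j "\<lambda>i. i < k+1 \<and> ?D ! i \<noteq> ?W ! i"] that i unfolding i_def[symmetric]
    by auto
  show ?thesis
  proof (cases "?D ! i < ?W ! i")
    case False
    then have gt: "?W ! i < ?D ! i" using i(2) by simp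
    have "?A = {}"
    proof (rule ccontr)
      assume "?A \<noteq> {}"
      then obtain \<sigma> where s: "\<sigma> \<in> SS \<Delta>" "mu k \<sigma> b = 1" by auto
      then have "sorted_list_of_set \<sigma> ! i \<le> (?W ! i, False)"
        using mu_char[OF s(1) cD cb] i(1) by (auto split: if_splits)
      moreover have "fst (sorted_list_of_set \<sigma> ! i) = ?D ! i" using SS_nth[OF s(1)] i cD by simp
      ultimately show False using gt by (cases "sorted_list_of_set \<sigma> ! i") auto
    qed
    then show ?thesis by (metis (no_types) card.empty even_zero)
  next
    case True
    define c where "c = ?D ! i"
    have cW: "c < ?W ! i" using True c_def by simp
    have Wc: "?W ! (i-1) < c" if "i > 0"
    proof -
      have "?W ! (i-1) = ?D ! (i-1)" using before that by simp
      also have "\<dots> < ?D ! i" using sorted_wrt_nth_less[OF sD, of "i-1" i] that i lD by simp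
      finally show ?thesis by (simp add: c_def)
    qed
    have muinv: "mu k (tg c ` \<sigma>) b = mu k \<sigma> b" if s: "\<sigma> \<in> SS \<Delta>" for \<sigma>
    proof -
      let ?xs = "sorted_list_of_set \<sigma>"
      have s': "tg c ` \<sigma> \<in> SS \<Delta>" using tg_SS[OF s] .
      have lx: "length ?xs = k+1" using SS_len[OF s] cD by simp
      have nth': "map (tg c) ?xs ! j = (if j = i then (c, \<not> snd (?xs ! j)) else ?xs ! j)"
        if "j < k+1" for j
      proof -
        have f: "fst (?xs ! j) = ?D ! j" using SS_nth[OF s, of j] that cD by simp
        have "(?D ! j = c) = (j = i)" unfolding c_def
          using nth_eq_iff_index_eq[of ?D j i] that i lD by simp
        then show ?thesis using f that lx by (auto simp: tg_def)
      qed
      have c1: "(map (tg c) ?xs ! j \<le> (?W ! j, False)) = (?xs ! j \<le> (?W ! j, False))"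
        if "j \<le> k" for j
      proof (cases "j = i")
        case True
        have "fst (?xs ! j) = c" using SS_nth[OF s, of j] that cD True c_def by simp
        then show ?thesis using nth'[of j] that True cW
          by (cases "?xs ! j") auto
      qed (use nth'[of j] that in auto)
      have c2: "((?W ! j, False) < map (tg c) ?xs ! (j+1)) = ((?W ! j, False) < ?xs ! (j+1))"
        if "j < k" for j
      proof (cases "j+1 = i")
        case True
        have "fst (?xs ! (j+1)) = c" using SS_nth[OF s, of "j+1"] that cD True c_def by simp
        moreover have "?W ! j < c" 
        proof -
          have "i > 0" "i - 1 = j" using True by auto
          then show ?thesis using Wc by metis
        qed
        ultimately show ?thesis using nth'[of "j+1"] that True
          by (cases "?xs ! (j+1)") auto
      qed (use nth'[of "j+1"] that in auto)
      show ?thesis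
        unfolding mu_char[OF s' cD cb] mu_char[OF s cD cb] tg_sls[OF s]
        using c1 c2 by simp
    qed
    let ?AF = "{\<sigma>\<in>?A. (c, False) \<in> \<sigma>}"
    let ?AT = "{\<sigma>\<in>?A. (c, True) \<in> \<sigma>}"
    have finA: "finite ?A" using SS_finite[OF finD] by simp
    have cin: "c \<in> \<Delta>" using c_def i lD finD by (metis nth_mem set_sorted_list_of_set)
    have split: "?A = ?AF \<union> ?AT"
    proof -
      have *: "(c, False) \<in> \<sigma> \<or> (c, True) \<in> \<sigma>" if "\<sigma> \<in> SS \<Delta>" for \<sigma>
      proof -
        from that cin have "c \<in> fst ` \<sigma>" by (simp add: SS_def)
        then obtain x where x: "x \<in> \<sigma>" "fst x = c" by auto
        then have "x = (c, snd x)" using prod.collapse[of x] by simp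
        then show ?thesis using x(1) by (cases "snd x") auto
      qed
      show ?thesis
      proof (rule set_eqI)
        fix \<sigma> show "\<sigma> \<in> ?A \<longleftrightarrow> \<sigma> \<in> ?AF \<union> ?AT" using *[of \<sigma>] by auto
      qed
    qed
    have disj: "?AF \<inter> ?AT = {}"
    proof -
      have "False" if "\<sigma> \<in> SS \<Delta>" "(c, False) \<in> \<sigma>" "(c, True) \<in> \<sigma>" for \<sigma>
      proof -
        have "inj_on fst \<sigma>" using that(1) by (simp add: SS_def)
        then show False using inj_onD[of fst \<sigma> "(c,False)" "(c,True)"] that by simp
      qed
      then show ?thesis by auto
    qed
    have img: "(\<lambda>\<sigma>. tg c ` \<sigma>) ` ?AF = ?AT"
    proof
      show "(\<lambda>\<sigma>. tg c ` \<sigma>) ` ?AF \<subseteq> ?AT"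
      proof
        fix \<tau> assume "\<tau> \<in> (\<lambda>\<sigma>. tg c ` \<sigma>) ` ?AF"
        then obtain \<sigma> where s: "\<sigma> \<in> ?AF" "\<tau> = tg c ` \<sigma>" by blast
        have "(c, True) = tg c (c, False)" by (simp add: tg_def)
        then have "(c, True) \<in> \<tau>" using s by auto
        then show "\<tau> \<in> ?AT" using s muinv tg_SS by auto
      qed
      show "?AT \<subseteq> (\<lambda>\<sigma>. tg c ` \<sigma>) ` ?AF"
      proof
        fix \<tau> assume t: "\<tau> \<in> ?AT"
        have "(c, False) = tg c (c, True)" by (simp add: tg_def)
        then have "(c, False) \<in> tg c ` \<tau>" using t by auto
        moreover have "mu k (tg c ` \<tau>) b = 1" using muinv[of \<tau>] t by simp
        moreover have "tg c ` \<tau> \<in> SS \<Delta>" using tg_SS[of \<tau>] t by simp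
        ultimately have "tg c ` \<tau> \<in> ?AF" by simp
        then show "\<tau> \<in> (\<lambda>\<sigma>. tg c ` \<sigma>) ` ?AF"
          by (rule rev_image_eqI) simp
      qed
    qed
    have inj: "inj_on (\<lambda>\<sigma>. tg c ` \<sigma>) ?AF"
      by (rule inj_on_inverseI[where g="\<lambda>\<sigma>. tg c ` \<sigma>"]) simp
    have "card ?AT = card ?AF" using card_image[OF inj] img by simp
    moreover have "card ?A = card ?AF + card ?AT"
    proof -
      have f1: "finite ?AF" using finA by (rule finite_subset[rotated]) blast
      have f2: "finite ?AT" using finA by (rule finite_subset[rotated]) blast
      have "card ?A = card (?AF \<union> ?AT)" using split by (rule arg_cong)
      also have "\<dots> = card ?AF + card ?AT" using card_Un_disjoint[OF f1 f2 disj] .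
      finally show ?thesis .
    qed
    ultimately have "card ?A = 2 * card ?AF" by simp
    then show ?thesis by simp
  qed
qed


lemma mu_01: "mu k \<sigma> b = of_bool (mu k \<sigma> b = 1)"
  unfolding mu_def Let_def by simp

lemma inner_sum:
  fixes \<Delta> :: "'a::linorder set"
  assumes "finite \<Delta>"
  shows "(\<Sum>\<sigma>\<in>SS \<Delta>. mu k \<sigma> b) = int (card {\<sigma>\<in>SS \<Delta>. mu k \<sigma> b = 1})"
proof -
  have "(\<Sum>\<sigma>\<in>SS \<Delta>. mu k \<sigma> b) = (\<Sum>\<sigma>\<in>SS \<Delta>. of_bool (mu k \<sigma> b = 1))"
    by (rule sum.cong[OF refl]) (rule mu_01)
  also have "\<dots> = int (card (SS \<Delta> \<inter> {\<sigma>. mu k \<sigma> b = 1}))"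
    using SS_finite[OF assms] by simp
  also have "SS \<Delta> \<inter> {\<sigma>. mu k \<sigma> b = 1} = {\<sigma>\<in>SS \<Delta>. mu k \<sigma> b = 1}" by auto
  finally show ?thesis .
qed

theorem lemma4p4:
  fixes L :: "'a::linorder set set" and k :: nat and M :: "'a set set" and \<Delta> :: "'a set"
  assumes "simplicial_complex L" and "finite L" and "complex_dim L k"
    and "cycle2 L k M" and "\<Delta> \<in> M"
  shows "odd (\<Sum>\<sigma>\<in>{\<sigma>\<in>OL L. card \<sigma> = k + 1 \<and> fst ` \<sigma> = \<Delta>}. \<Sum>b\<in>M. mu k \<sigma> b)"
proof -
  have Msub: "M \<subseteq> {s\<in>L. card s = k + 1}" using assms(4) by (simp add: cycle2_def)
  have DL: "\<Delta> \<in> L" using Msub assms(5) by blast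
  have cD: "card \<Delta> = k+1" using Msub assms(5) by blast
  have cpos: "card \<Delta> > 0" using cD by simp
  have finD: "finite \<Delta>" using cpos card_gt_0_iff by blast
  have Dne: "\<Delta> \<noteq> {}" using cpos card_gt_0_iff by blast
  have finM: "finite M" using assms(2) by (rule finite_subset[OF Msub, OF finite_subset[rotated]]) blast
  have cb: "card b = k+1" if "b \<in> M" for b using Msub that by blast
  have I: "{\<sigma>\<in>OL L. card \<sigma> = k + 1 \<and> fst ` \<sigma> = \<Delta>} = SS \<Delta>"
  proof
    show "{\<sigma>\<in>OL L. card \<sigma> = k + 1 \<and> fst ` \<sigma> = \<Delta>} \<subseteq> SS \<Delta>"
      by (auto simp: OL_def SS_def)
    show "SS \<Delta> \<subseteq> {\<sigma>\<in>OL L. card \<sigma> = k + 1 \<and> fst ` \<sigma> = \<Delta>}"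
    proof
      fix \<sigma> assume s: "\<sigma> \<in> SS \<Delta>"
      have "card \<sigma> = k+1" using SS_card[OF s] cD by simp
      moreover have "\<sigma> \<noteq> {}" using s Dne by (auto simp: SS_def)
      ultimately show "\<sigma> \<in> {\<sigma>\<in>OL L. card \<sigma> = k + 1 \<and> fst ` \<sigma> = \<Delta>}"
        using s DL by (auto simp: OL_def SS_def)
    qed
  qed
  let ?c = "\<lambda>b. int (card {\<sigma>\<in>SS \<Delta>. mu k \<sigma> b = 1})"
  have "(\<Sum>\<sigma>\<in>SS \<Delta>. \<Sum>b\<in>M. mu k \<sigma> b) = (\<Sum>b\<in>M. \<Sum>\<sigma>\<in>SS \<Delta>. mu k \<sigma> b)"
    by (rule sum.swap)
  also have "\<dots> = (\<Sum>b\<in>M. ?c b)"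
    by (rule sum.cong[OF refl]) (rule inner_sum[OF finD])
  also have "\<dots> = ?c \<Delta> + (\<Sum>b\<in>M - {\<Delta>}. ?c b)"
    using finM assms(5) by (simp add: sum.remove)
  finally have eq: "(\<Sum>\<sigma>\<in>SS \<Delta>. \<Sum>b\<in>M. mu k \<sigma> b) = ?c \<Delta> + (\<Sum>b\<in>M - {\<Delta>}. ?c b)" .
  have c1: "?c \<Delta> = 1" using A_Delta[OF cD] by simp
  have ev: "even (\<Sum>b\<in>M - {\<Delta>}. ?c b)"
  proof (rule dvd_sum)
    fix b assume "b \<in> M - {\<Delta>}"
    then have "even (card {\<sigma>\<in>SS \<Delta>. mu k \<sigma> b = 1})" using A_even[OF cD cb] by auto
    then show "even (?c b)" by simp
  qed
  show ?thesis unfolding I eq c1 using ev by simp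
qed

end
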